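(* Let $0<\lambda<1$, let $c>0$, and let $A \subseteq \mathbb{N}$. Suppose that $$\sum_{a \in A[x]} w(a) \sim \exp(c x^{1-\lambda}).$$ Then $$\limsup_{x \to \infty} \frac{\pi_A(x + x^\lambda) - \pi_A(x)}{x^\lambda/\log(x)} \le \frac{\exp[c(1-\lambda)] - 1}{c(1-\lambda)}.$$
   Context: Fix $0<\lambda<1$. For $c>0$ and $x>0$, define $w(x) = \frac{c(1-\lambda)\log(x)\exp(c x^{1-\lambda})}{x^\lambda}$. Here $\mathbb{N} = \{1,2,3,\dots\}$. For $A \subseteq \mathbb{N}$ and $x\in\mathbb{R}$, write $A[x] = \{a \in A : a \le x\}$ and $\pi_A(x) = \# A[x]$. $f\sim g$ means $f(x)/g(x)\to 1$ as $x\to\infty$. *)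

theory Defs
  imports "HOL-Analysis.Analysis" "HOL-Library.Landau_Symbols"
begin

definition wt :: "real \<Rightarrow> real \<Rightarrow> real \<Rightarrow> real" where
  "wt lam c x = c * (1 - lam) * ln x * exp (c * x powr (1 - lam)) / x powr lam"

definition upto_set :: "nat set \<Rightarrow> real \<Rightarrow> nat set" where
  "upto_set A x = {a \<in> A. real a \<le> x}"

definition countA :: "nat set \<Rightarrow> real \<Rightarrow> real" where
  "countA A x = real (card (upto_set A x))"

end

theory Submission
  imports Defs "HOL-Real_Asymp.Real_Asymp"
begin

lemma upto_finite: "finite (upto_set A y)"
proof -
  have "upto_set A y \<subseteq> {..nat \<lceil>y\<rceil>}"
  proof -
    have "a \<le> nat \<lceil>y\<rceil>" if "real a \<le> y" for a
    proof -
      have "real a \<le> real (nat \<lceil>y\<rceil>)" using real_nat_ceiling_ge[of y] that by linarith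
      thus ?thesis by simp
    qed
    thus ?thesis unfolding upto_set_def by auto
  qed
  then show ?thesis by (rule finite_subset) auto
qed

lemma phi_deriv:
  assumes "0 < t"
  shows "((\<lambda>t. c * t powr (1 - lam) - lam * ln t) has_real_derivative
           (c*(1-lam)*t powr (-lam) - lam/t)) (at t)"
  using assms
  by (auto intro!: derivative_eq_intros)

theorem mainTheorem4:
  fixes lam c :: real and A :: "nat set"
  assumes "0 < lam" "lam < 1" "0 < c"
    and "0 \<notin> A"
    and "(\<lambda>x. \<Sum>a\<in>upto_set A x. wt lam c (real a)) \<sim>[at_top] (\<lambda>x. exp (c * x powr (1 - lam)))"
  shows "Limsup at_top (\<lambda>x::real. ereal ((countA A (x + x powr lam) - countA A x) / (x powr lam / ln x)))
           \<le> ereal ((exp (c * (1 - lam)) - 1) / (c * (1 - lam)))"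
proof -
  note lam = assms(1,2) and cpos = assms(3)
  define S where "S = (\<lambda>x. \<Sum>a\<in>upto_set A x. wt lam c (real a))"
  define E where "E = (\<lambda>x::real. exp (c * x powr (1 - lam)))"
  define L where "L = (exp (c * (1 - lam)) - 1) / (c * (1 - lam))"
  define \<phi> where "\<phi> = (\<lambda>t::real. c * t powr (1 - lam) - lam * ln t)"
  have Epos: "E x > 0" for x unfolding E_def by simp
  have ev: "eventually (\<lambda>t::real. c*(1-lam)*t powr (-lam) - lam/t \<ge> 0) at_top"
    using lam cpos by real_asymp
  then obtain t0 where t0: "\<And>t. t \<ge> t0 \<Longrightarrow> c*(1-lam)*t powr (-lam) - lam/t \<ge> 0"
    by (auto simp: eventually_at_top_linorder)
  define x0 where "x0 = max t0 2"
  have phimono: "\<phi> x \<le> \<phi> y" if "x0 \<le> x" "x \<le> y" for x y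
  proof (rule DERIV_nonneg_imp_nondecreasing[OF that(2)])
    fix t assume "x \<le> t" "t \<le> y"
    hence "t \<ge> t0" "t > 0" using that unfolding x0_def by auto
    thus "\<exists>d. DERIV \<phi> t :> d \<and> d \<ge> 0"
      using phi_deriv[of t c lam] t0 unfolding \<phi>_def by blast
  qed
  have wt_eq: "wt lam c x = c * (1 - lam) * ln x * exp (\<phi> x)" if "x > 0" for x
    using that unfolding wt_def \<phi>_def by (simp add: powr_def exp_diff)
  have wmono: "wt lam c x \<le> wt lam c y" if "x0 \<le> x" "x \<le> y" for x y
  proof -
    have x2: "x \<ge> 2" using that unfolding x0_def by auto
    have "c * (1 - lam) * ln x * exp (\<phi> x) \<le> c * (1 - lam) * ln y * exp (\<phi> y)"
      apply (intro mult_mono mult_left_mono)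
      using phimono[OF that] x2 that lam cpos by auto
    thus ?thesis using wt_eq x2 that by auto
  qed
  have wpos: "wt lam c x > 0" if "x \<ge> 2" for x
    using wt_eq[of x] that lam cpos by simp
  define G where "G = (\<lambda>x. (S (x + x powr lam) - S x) / (c * (1 - lam) * E x))"
  have key: "eventually (\<lambda>x. ereal ((countA A (x + x powr lam) - countA A x) / (x powr lam / ln x))
               \<le> ereal (G x)) at_top"
    using eventually_ge_at_top[of x0]
  proof eventually_elim
    case (elim x)
    have x2: "x \<ge> 2" using elim unfolding x0_def by auto
    define h where "h = x powr lam"
    have hpos: "h > 0" using x2 unfolding h_def by simp
    define D where "D = upto_set A (x + h) - upto_set A x"
    have sub: "upto_set A x \<subseteq> upto_set A (x + h)" using hpos unfolding upto_set_def by auto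
    have cnt: "countA A (x + h) - countA A x = real (card D)"
      unfolding countA_def D_def using sub upto_finite[of A x] upto_finite[of A "x+h"]
      by (simp add: card_Diff_subset card_mono of_nat_diff)
    have sm: "S (x + h) - S x = (\<Sum>a\<in>D. wt lam c (real a))"
      unfolding S_def D_def using sub upto_finite[of A "x+h"]
      by (simp add: sum_diff)
    have bd: "real (card D) * wt lam c x \<le> (\<Sum>a\<in>D. wt lam c (real a))"
    proof (rule sum_bounded_below)
      fix a assume "a \<in> D"
      hence "real a > x" unfolding D_def upto_set_def by auto
      thus "wt lam c x \<le> wt lam c (real a)" using wmono[OF elim] by auto
    qed
    have weq: "wt lam c x = c * (1 - lam) * ln x * E x / h"
      unfolding wt_def E_def h_def by simp
    have lnpos: "ln x > 0" using x2 by simp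
    have cl: "c * (1 - lam) > 0" using lam cpos by simp
    have "real (card D) / (h / ln x) = real (card D) * wt lam c x / (c * (1 - lam) * E x)"
    proof -
      have "c * (1 - lam) * E x \<noteq> 0" using lam cpos Epos[of x] by simp
      thus ?thesis unfolding weq using hpos lnpos by (simp add: field_simps)
    qed
    also have "\<dots> \<le> (S (x + h) - S x) / (c * (1 - lam) * E x)"
      unfolding sm using bd cl Epos[of x] by (intro divide_right_mono) auto
    finally show ?case unfolding G_def cnt[symmetric] h_def by simp
  qed
  have lim1: "((\<lambda>x. S x / E x) \<longlongrightarrow> 1) at_top"
  proof (rule asymp_equivD_strong[OF assms(5)[folded S_def E_def]])
    show "\<forall>\<^sub>F x in at_top. S x \<noteq> 0 \<or> E x \<noteq> 0"
      using Epos by (intro always_eventually) (metis less_irrefl)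
  qed
  have hlim: "filterlim (\<lambda>x::real. x + x powr lam) at_top at_top"
    using lam by real_asymp
  have lim2: "((\<lambda>x. S (x + x powr lam) / E (x + x powr lam)) \<longlongrightarrow> 1) at_top"
    using filterlim_compose[OF lim1 hlim] by simp
  have lim3: "((\<lambda>x::real. (x + x powr lam) powr (1 - lam) - x powr (1-lam)) \<longlongrightarrow> 1 - lam) at_top"
    using lam by real_asymp
  have lim4: "((\<lambda>x. E (x + x powr lam) / E x) \<longlongrightarrow> exp (c * (1 - lam))) at_top"
  proof -
    have "E (x + x powr lam) / E x = exp (c * ((x + x powr lam) powr (1 - lam) - x powr (1-lam)))" for x
      unfolding E_def by (simp add: exp_diff[symmetric] algebra_simps)
    moreover have "((\<lambda>x. exp (c * ((x + x powr lam) powr (1 - lam) - x powr (1-lam)))) \<longlongrightarrow> exp (c * (1 - lam))) at_top"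
      by (intro tendsto_intros lim3)
    ultimately show ?thesis by simp
  qed
  have Geq: "G x = ((S (x + x powr lam) / E (x + x powr lam)) * (E (x + x powr lam) / E x) - S x / E x) / (c * (1 - lam))" for x
    unfolding G_def using Epos[of x] Epos[of "x + x powr lam"] lam cpos
    by (simp add: field_simps)
  have limG: "(G \<longlongrightarrow> L) at_top"
  proof -
    have "((\<lambda>x. ((S (x + x powr lam) / E (x + x powr lam)) * (E (x + x powr lam) / E x) - S x / E x) / (c * (1 - lam)))
            \<longlongrightarrow> (1 * exp (c * (1 - lam)) - 1) / (c * (1 - lam))) at_top"
      by (intro tendsto_intros lim1 lim2 lim4) (use lam cpos in auto)
    thus ?thesis unfolding L_def Geq[abs_def] by simp
  qed
  have "Limsup at_top (\<lambda>x::real. ereal ((countA A (x + x powr lam) - countA A x) / (x powr lam / ln x)))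
        \<le> Limsup at_top (\<lambda>x. ereal (G x))"
    by (rule Limsup_mono[OF key])
  also have "\<dots> = ereal L"
    by (rule lim_imp_Limsup) (auto intro: tendsto_ereal limG)
  finally show ?thesis unfolding L_def .
qed

end
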